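(* For any tile sets $\mathcal{T},\mathcal{U},\mathcal{B}$ with mutually consistent frequencies, $d(\mathcal{T},\mathcal{U};\mathcal{B})\le 2$. If moreover $\mathcal{T},\mathcal{U},\mathcal{B}$ consist only of exact tiles, then $d(\mathcal{T},\mathcal{U};\mathcal{B})\le 1$.
   Context: Fix $n,m\ge1$; $\mathcal{D}$ is the set of $n\times m$ binary matrices. A tile is $T=(t(T),a(T))$ with nonempty $t(T)\subseteq\{1..n\}$, $a(T)\subseteq\{1..m\}$, $\mathrm{area}(T)=t(T)\times a(T)$. $\mathrm{fr}(T;D)=\frac1{|\mathrm{area}(T)|}\sum_{(i,j)\in\mathrm{area}(T)}D(i,j)$, $\mathrm{fr}(T;p)=\sum_Dp(D)\mathrm{fr}(T;D)$. Each tile carries a target frequency $\alpha_T$; tile sets are consistent if some distribution on $\mathcal{D}$ attains all target frequencies simultaneously. For a tile set $\mathcal{T}$, $p^*_{\mathcal{T}}$ is the entropy-maximising distribution among those with $\mathrm{fr}(T;p)=\alpha_T$ for all $T\in\mathcal{T}$. $\mathrm{KL}(\mathcal{T}\|\mathcal{U})=\mathrm{KL}(p^*_{\mathcal{T}}\|p^*_{\mathcal{U}})$ (natural log). A tile is exact if its frequency is $0$ or $1$. With $\mathcal{M}=\mathcal{T}\cup\mathcal{U}\cup\mathcal{B}$, $d(\mathcal{T},\mathcal{U};\mathcal{B})=\frac{\mathrm{KL}(\mathcal{M}\|\mathcal{U}\cup\mathcal{B})+\mathrm{KL}(\mathcal{M}\|\mathcal{T}\cup\mathcal{B})}{\mathrm{KL}(\mathcal{M}\|\mathcal{B})}$,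 defined as $1$ if $\mathrm{KL}(\mathcal{M}\|\mathcal{B})=0$. *)

theory Defs
  imports "HOL-Analysis.Analysis"
begin

text \<open>A binary n x m matrix D is represented by the set of its 1-entries,
  a subset of {1..n} x {1..m}; so D(i,j) = 1 iff (i,j) is in D.\<close>
type_synonym matrix = "(nat \<times> nat) set"

definition datasets :: "nat \<Rightarrow> nat \<Rightarrow> matrix set" where
  "datasets n m = Pow ({1..n} \<times> {1..m})"

type_synonym tile = "nat set \<times> nat set"

definition tile_ok :: "nat \<Rightarrow> nat \<Rightarrow> tile \<Rightarrow> bool" where
  "tile_ok n m T \<longleftrightarrow> fst T \<noteq> {} \<and> fst T \<subseteq> {1..n} \<and> snd T \<noteq> {} \<and> snd T \<subseteq> {1..m}"

definition area :: "tile \<Rightarrow> (nat \<times> nat) set" where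
  "area T = fst T \<times> snd T"

definition fr_data :: "tile \<Rightarrow> matrix \<Rightarrow> real" where
  "fr_data T D = (1 / real (card (area T))) * (\<Sum>ij\<in>area T. indicator D ij)"

definition is_dist :: "nat \<Rightarrow> nat \<Rightarrow> (matrix \<Rightarrow> real) \<Rightarrow> bool" where
  "is_dist n m p \<longleftrightarrow> (\<forall>D\<in>datasets n m. 0 \<le> p D) \<and> (\<forall>D. D \<notin> datasets n m \<longrightarrow> p D = 0)
      \<and> (\<Sum>D\<in>datasets n m. p D) = 1"

definition fr_dist :: "nat \<Rightarrow> nat \<Rightarrow> tile \<Rightarrow> (matrix \<Rightarrow> real) \<Rightarrow> real" where
  "fr_dist n m T p = (\<Sum>D\<in>datasets n m. p D * fr_data T D)"

definition feasible :: "nat \<Rightarrow> nat \<Rightarrow> (tile \<Rightarrow> real) \<Rightarrow> tile set \<Rightarrow> (matrix \<Rightarrow> real) \<Rightarrow> bool" where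
  "feasible n m \<alpha> TS p \<longleftrightarrow> is_dist n m p \<and> (\<forall>T\<in>TS. fr_dist n m T p = \<alpha> T)"

definition consistent :: "nat \<Rightarrow> nat \<Rightarrow> (tile \<Rightarrow> real) \<Rightarrow> tile set \<Rightarrow> bool" where
  "consistent n m \<alpha> TS \<longleftrightarrow> (\<exists>p. feasible n m \<alpha> TS p)"

text \<open>Shannon entropy (natural log); note 0 * ln 0 = 0 in Isabelle.\<close>
definition entropy :: "nat \<Rightarrow> nat \<Rightarrow> (matrix \<Rightarrow> real) \<Rightarrow> real" where
  "entropy n m p = - (\<Sum>D\<in>datasets n m. p D * ln (p D))"

definition maxent :: "nat \<Rightarrow> nat \<Rightarrow> (tile \<Rightarrow> real) \<Rightarrow> tile set \<Rightarrow> (matrix \<Rightarrow> real)" where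
  "maxent n m \<alpha> TS = (THE p. feasible n m \<alpha> TS p \<and>
      (\<forall>q. feasible n m \<alpha> TS q \<longrightarrow> entropy n m q \<le> entropy n m p))"

text \<open>Kullback-Leibler divergence (natural log); terms with p D = 0 vanish.\<close>
definition KL :: "nat \<Rightarrow> nat \<Rightarrow> (matrix \<Rightarrow> real) \<Rightarrow> (matrix \<Rightarrow> real) \<Rightarrow> real" where
  "KL n m p q = (\<Sum>D\<in>datasets n m. p D * ln (p D / q D))"

definition KL_tiles :: "nat \<Rightarrow> nat \<Rightarrow> (tile \<Rightarrow> real) \<Rightarrow> tile set \<Rightarrow> tile set \<Rightarrow> real" where
  "KL_tiles n m \<alpha> TS US = KL n m (maxent n m \<alpha> TS) (maxent n m \<alpha> US)"

definition dist_d :: "nat \<Rightarrow> nat \<Rightarrow> (tile \<Rightarrow> real) \<Rightarrow> tile set \<Rightarrow> tile set \<Rightarrow> tile set \<Rightarrow> real" where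
  "dist_d n m \<alpha> TS US BS =
     (let MS = TS \<union> US \<union> BS in
      if KL_tiles n m \<alpha> MS BS = 0 then 1
      else (KL_tiles n m \<alpha> MS (US \<union> BS) + KL_tiles n m \<alpha> MS (TS \<union> BS)) / KL_tiles n m \<alpha> MS BS)"

definition exact_tile :: "(tile \<Rightarrow> real) \<Rightarrow> tile \<Rightarrow> bool" where
  "exact_tile \<alpha> T \<longleftrightarrow> \<alpha> T = 0 \<or> \<alpha> T = 1"

end

theory Submission
  imports Defs "HOL-Real_Asymp.Real_Asymp"
begin

lemma finite_datasets [simp]: "finite (datasets n m)"
  unfolding datasets_def by simp

lemma key_ineq:
  fixes a b :: real
  assumes "0 \<le> a" "0 \<le> b" "0 < a \<Longrightarrow> 0 < b"
  shows "- a * ln b \<ge> - a * ln a + a - b"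
proof (cases "a = 0")
  case True thus ?thesis using assms by simp
next
  case False
  hence a: "a > 0" using assms by simp
  hence b: "b > 0" using assms by simp
  have "ln (b/a) \<le> b/a - 1" using a b by (intro ln_le_minus_one) simp
  hence "a * ln (b/a) \<le> a * (b/a - 1)" using a by (simp add: mult_left_mono)
  thus ?thesis using a b by (simp add: ln_div algebra_simps)
qed

lemma feasible_affine:
  assumes "feasible n m \<alpha> X p" "feasible n m \<alpha> X q"
    and "\<And>D. D \<in> datasets n m \<Longrightarrow> 0 \<le> p D + t * (q D - p D)"
  shows "feasible n m \<alpha> X (\<lambda>D. p D + t * (q D - p D))"
proof -
  have s: "(\<Sum>D\<in>datasets n m. p D + t * (q D - p D)) = (\<Sum>D\<in>datasets n m. p D) + t * ((\<Sum>D\<in>datasets n m. q D) - (\<Sum>D\<in>datasets n m. p D))"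
    by (simp add: sum.distrib sum_subtractf[symmetric] sum_distrib_left)
  have f: "fr_dist n m T (\<lambda>D. p D + t * (q D - p D)) = fr_dist n m T p + t * (fr_dist n m T q - fr_dist n m T p)" for T
    unfolding fr_dist_def
    by (simp add: algebra_simps sum.distrib sum_distrib_left sum_subtractf)
  show ?thesis using assms s f unfolding feasible_def is_dist_def by auto
qed

lemma feasible_mono: "X \<subseteq> Y \<Longrightarrow> feasible n m \<alpha> Y p \<Longrightarrow> feasible n m \<alpha> X p"
  unfolding feasible_def by auto

lemma continuous_xlnx: "continuous_on {0..} (\<lambda>x::real. x * ln x)"
proof -
  have "continuous (at x within {0..}) (\<lambda>x::real. x * ln x)" if "x \<ge> 0" for x
  proof (cases "x = 0")
    case True
    have "((\<lambda>x::real. x * ln x) \<longlongrightarrow> 0) (at_right 0)" by real_asymp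
    thus ?thesis using True by (simp add: continuous_within at_within_Ici_at_right)
  next
    case False
    hence "x > 0" using that by simp
    hence "isCont (\<lambda>x::real. x * ln x) x" by (auto intro!: continuous_intros)
    thus ?thesis using continuous_at_imp_continuous_at_within by blast
  qed
  thus ?thesis using continuous_on_eq_continuous_within by auto
qed

lemma maxent_exists:
  assumes "consistent n m \<alpha> X"
  shows "\<exists>p. feasible n m \<alpha> X p \<and> (\<forall>q. feasible n m \<alpha> X q \<longrightarrow> entropy n m q \<le> entropy n m p)"
proof -
  let ?\<Omega> = "datasets n m"
  define S where "S = {p. feasible n m \<alpha> X p}"
  define K :: "(matrix \<Rightarrow> real) set" where "K = PiE UNIV (\<lambda>D. if D \<in> ?\<Omega> then {0..1} else {0})"
  have "compactin (product_topology (\<lambda>_. euclidean) UNIV) K"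
    unfolding K_def by (subst compactin_PiE) auto
  hence cK: "compact K" by (simp add: euclidean_product_topology)
  have Seq: "S = (\<Inter>D\<in>?\<Omega>. {p. 0 \<le> p D}) \<inter> (\<Inter>D\<in>-?\<Omega>. {p. p D = 0}) \<inter> {p. (\<Sum>D\<in>?\<Omega>. p D) = 1}
     \<inter> (\<Inter>T\<in>X. {p. fr_dist n m T p = \<alpha> T})"
    unfolding S_def feasible_def is_dist_def by auto
  have cont_coord: "continuous_on UNIV (\<lambda>p::matrix \<Rightarrow> real. p D)" for D by simp
  have cfr: "continuous_on UNIV (\<lambda>p. fr_dist n m T p)" for T
    unfolding fr_dist_def by (intro continuous_on_sum continuous_on_mult_right cont_coord)
  have clS: "closed S" unfolding Seq
    by (intro closed_Int closed_INT ballI closed_Collect_le closed_Collect_eq cont_coord cfr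
        continuous_on_const continuous_on_sum)
  have SK: "S \<subseteq> K"
  proof
    fix p assume "p \<in> S"
    hence f: "feasible n m \<alpha> X p" by (simp add: S_def)
    have "p D \<in> (if D \<in> ?\<Omega> then {0..1} else {0})" for D
    proof (cases "D \<in> ?\<Omega>")
      case True
      have "p D \<le> (\<Sum>D\<in>?\<Omega>. p D)"
        using f True by (intro member_le_sum) (auto simp: feasible_def is_dist_def finite_datasets)
      thus ?thesis using f True by (auto simp: feasible_def is_dist_def)
    next
      case False thus ?thesis using f by (auto simp: feasible_def is_dist_def)
    qed
    thus "p \<in> K" unfolding K_def by (simp add: PiE_iff)
  qed
  have cS: "compact S" using compact_Int_closed[OF cK clS] SK by (simp add: Int_absorb1)
  have nS: "S \<noteq> {}" using assms by (auto simp: S_def consistent_def)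
  have "continuous_on S (entropy n m)"
  proof -
    have "continuous_on S (\<lambda>p. p D * ln (p D))" for D
    proof (rule continuous_on_compose2[OF continuous_xlnx, of S "\<lambda>p. p D"])
      show "continuous_on S (\<lambda>p. p D)" using cont_coord continuous_on_subset by blast
      show "(\<lambda>p. p D) ` S \<subseteq> {0..}"
        by (auto simp: S_def feasible_def is_dist_def)
    qed
    thus ?thesis unfolding entropy_def[abs_def]
      by (intro continuous_on_minus continuous_on_sum) auto
  qed
  from continuous_attains_sup[OF cS nS this] show ?thesis by (auto simp: S_def)
qed

lemma feas_nonneg: "feasible n m \<alpha> X p \<Longrightarrow> 0 \<le> p D"
  unfolding feasible_def is_dist_def by (cases "D \<in> datasets n m") auto

lemma feas_out: "feasible n m \<alpha> X p \<Longrightarrow> p D \<noteq> 0 \<Longrightarrow> D \<in> datasets n m"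
  unfolding feasible_def is_dist_def by auto

lemma feas_sum: "feasible n m \<alpha> X p \<Longrightarrow> (\<Sum>D\<in>datasets n m. p D) = 1"
  unfolding feasible_def is_dist_def by auto

lemma maxent_support:
  assumes fp: "feasible n m \<alpha> X p" and maxp: "\<forall>q. feasible n m \<alpha> X q \<longrightarrow> entropy n m q \<le> entropy n m p"
    and fq: "feasible n m \<alpha> X q" and qD: "q D0 > 0"
  shows "p D0 > 0"
proof (rule ccontr)
  let ?\<Omega> = "datasets n m"
  assume np: "\<not> p D0 > 0"
  have D0: "D0 \<in> ?\<Omega>" using feas_out[OF fq] qD by auto
  have p0: "p D0 = 0" using feas_nonneg[OF fp, of D0] np by simp
  define c where "c = q D0"
  define K where "K = entropy n m p - entropy n m q + c"
  define t where "t = min (1/2) (exp (- ((\<bar>K\<bar> + 1) / c)))"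
  have c: "c > 0" using qD c_def by simp
  have t0: "0 < t" and t1: "t < 1" by (auto simp: t_def)
  have "ln (1/t) \<ge> (\<bar>K\<bar>+1)/c"
  proof -
    have "t \<le> exp (- ((\<bar>K\<bar> + 1) / c))" by (simp add: t_def)
    hence "ln t \<le> - ((\<bar>K\<bar> + 1) / c)" using t0 by (metis ln_exp ln_le_cancel_iff exp_gt_zero)
    thus ?thesis using t0 by (simp add: ln_div)
  qed
  hence "\<bar>K\<bar>+1 \<le> c * ln (1/t)" using c by (simp add: pos_divide_le_eq mult.commute)
  hence big: "c * ln (1/t) > K" by linarith
  define r where "r = (\<lambda>D. p D + t * (q D - p D))"
  have r_conv: "r D = (1-t) * p D + t * q D" for D by (simp add: r_def algebra_simps)
  have rnn: "0 \<le> r D" for D unfolding r_conv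
    using feas_nonneg[OF fp, of D] feas_nonneg[OF fq, of D] t0 t1 by simp
  have fr: "feasible n m \<alpha> X r" unfolding r_def
    by (rule feasible_affine[OF fp fq]) (use rnn r_def in auto)
  have sr: "(\<Sum>D\<in>?\<Omega>. r D) = 1" by (rule feas_sum[OF fr])
  have sp: "(\<Sum>D\<in>?\<Omega>. p D) = 1" by (rule feas_sum[OF fp])
  have sq: "(\<Sum>D\<in>?\<Omega>. q D) = 1" by (rule feas_sum[OF fq])
  have Hr: "entropy n m r = (1-t) * (\<Sum>D\<in>?\<Omega>. - p D * ln (r D)) + t * (\<Sum>D\<in>?\<Omega>. - q D * ln (r D))"
  proof -
    have "entropy n m r = (\<Sum>D\<in>?\<Omega>. - r D * ln (r D))" by (simp add: entropy_def sum_negf)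
    also have "\<dots> = (\<Sum>D\<in>?\<Omega>. (1-t) * (- p D * ln (r D)) + t * (- q D * ln (r D)))"
      by (rule sum.cong) (simp_all add: r_conv algebra_simps)
    also have "\<dots> = (1-t) * (\<Sum>D\<in>?\<Omega>. - p D * ln (r D)) + t * (\<Sum>D\<in>?\<Omega>. - q D * ln (r D))"
      by (simp only: sum.distrib sum_distrib_left)
    finally show ?thesis .
  qed
  have A: "(\<Sum>D\<in>?\<Omega>. - p D * ln (r D)) \<ge> (\<Sum>D\<in>?\<Omega>. - p D * ln (p D) + p D - r D)"
  proof (rule sum_mono)
    fix D assume "D \<in> ?\<Omega>"
    show "- p D * ln (p D) + p D - r D \<le> - p D * ln (r D)"
      by (rule key_ineq) (use feas_nonneg[OF fp, of D] rnn t0 t1 in \<open>auto simp: r_conv intro!: add_pos_nonneg mult_nonneg_nonneg feas_nonneg[OF fq]\<close>)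
  qed
  have A': "(\<Sum>D\<in>?\<Omega>. - p D * ln (p D) + p D - r D) = entropy n m p"
    unfolding entropy_def using sp sr by (simp add: sum.distrib sum_subtractf sum_negf)
  have B: "(\<Sum>D\<in>?\<Omega>. - q D * ln (r D)) \<ge> (\<Sum>D\<in>?\<Omega>. - q D * ln (q D) + q D - r D + (if D = D0 then c * ln (1/t) - c + t * c else 0))"
  proof (rule sum_mono)
    fix D assume "D \<in> ?\<Omega>"
    show "- q D * ln (q D) + q D - r D + (if D = D0 then c * ln (1/t) - c + t * c else 0) \<le> - q D * ln (r D)"
    proof (cases "D = D0")
      case True
      have "r D0 = t * c" by (simp add: r_conv p0 c_def)
      thus ?thesis using True t0 c by (simp add: c_def ln_mult ln_div algebra_simps)
    next
      case False
      have "- q D * ln (q D) + q D - r D \<le> - q D * ln (r D)"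
        by (rule key_ineq) (use feas_nonneg[OF fq, of D] feas_nonneg[OF fp, of D] rnn t0 t1 in \<open>auto simp: r_conv intro!: add_nonneg_pos\<close>)
      thus ?thesis using False by simp
    qed
  qed
  have B': "(\<Sum>D\<in>?\<Omega>. - q D * ln (q D) + q D - r D + (if D = D0 then c * ln (1/t) - c + t * c else 0))
     = entropy n m q + (c * ln (1/t) - c + t * c)"
    unfolding entropy_def using sq sr D0 by (simp add: sum.distrib sum_subtractf sum_negf sum.delta)
  have "entropy n m r \<ge> (1-t) * entropy n m p + t * (entropy n m q + (c * ln (1/t) - c + t * c))"
    unfolding Hr using A A' B B' t0 t1
    by (intro add_mono mult_left_mono) auto
  moreover have "t * (entropy n m q + (c * ln (1/t) - c + t * c)) > t * entropy n m p"
  proof -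
    have "t * c > 0" using t0 c by simp
    hence "entropy n m q + (c * ln (1/t) - c + t * c) > entropy n m p" using big unfolding K_def by linarith
    thus ?thesis using t0 by (intro mult_strict_left_mono) auto
  qed
  ultimately have "entropy n m r > entropy n m p" by (simp add: algebra_simps)
  with maxp fr show False by force
qed

lemma maxent_orth:
  assumes fp: "feasible n m \<alpha> X p" and maxp: "\<forall>q. feasible n m \<alpha> X q \<longrightarrow> entropy n m q \<le> entropy n m p"
    and fq: "feasible n m \<alpha> X q"
  shows "(\<Sum>D\<in>datasets n m. q D * ln (p D)) = (\<Sum>D\<in>datasets n m. p D * ln (p D))"
proof -
  let ?\<Omega> = "datasets n m"
  define P where "P = {D\<in>?\<Omega>. p D > 0}"
  have finP: "finite P" by (simp add: P_def)
  have PO: "P \<subseteq> ?\<Omega>" by (auto simp: P_def)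
  have q0: "q D = 0" if "D \<in> ?\<Omega>" "D \<notin> P" for D
  proof -
    have "\<not> q D > 0" using maxent_support[OF fp maxp fq, of D] that by (auto simp: P_def)
    thus ?thesis using feas_nonneg[OF fq, of D] by simp
  qed
  have p0: "p D = 0" if "D \<in> ?\<Omega>" "D \<notin> P" for D
    using feas_nonneg[OF fp, of D] that by (auto simp: P_def)
  have sumP: "(\<Sum>D\<in>?\<Omega>. f D) = (\<Sum>D\<in>P. f D)" if "\<And>D. D \<in> ?\<Omega> \<Longrightarrow> D \<notin> P \<Longrightarrow> f D = 0" for f :: "matrix \<Rightarrow> real"
    by (rule sum.mono_neutral_right) (use that PO in auto)
  have Pne: "P \<noteq> {}"
  proof
    assume "P = {}"
    hence "(\<Sum>D\<in>?\<Omega>. p D) = 0" using sumP[of p] p0 by simp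
    thus False using feas_sum[OF fp] by simp
  qed
  define e where "e = Min ((\<lambda>D. p D / (\<bar>q D - p D\<bar> + 1)) ` P)"
  have e0: "e > 0" unfolding e_def using finP Pne by (subst Min_gr_iff) (auto simp: P_def)
  have eD: "e \<le> p D / (\<bar>q D - p D\<bar> + 1)" if "D \<in> P" for D
    unfolding e_def using finP that by (intro Min_le) auto
  define r where "r = (\<lambda>s D. p D + s * (q D - p D))"
  define g where "g = (\<lambda>s. - (\<Sum>D\<in>P. r s D * ln (r s D)))"
  have Hg: "entropy n m (r s) = g s" for s
    unfolding entropy_def g_def by (subst sumP) (auto simp: r_def p0 q0)
  have rpos: "r s D > 0" if "\<bar>s\<bar> < e" "D \<in> P" for s D
  proof -
    have pD: "p D > 0" using that by (auto simp: P_def)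
    have "\<bar>s * (q D - p D)\<bar> \<le> \<bar>s\<bar> * (\<bar>q D - p D\<bar> + 1)" by (simp add: abs_mult mult_left_mono)
    also have "\<dots> < e * (\<bar>q D - p D\<bar> + 1)" using that by (intro mult_strict_right_mono) auto
    also have "\<dots> \<le> p D" using eD[OF that(2)] by (simp add: pos_le_divide_eq)
    finally show ?thesis unfolding r_def by linarith
  qed
  have loc: "\<forall>s. \<bar>0 - s\<bar> < e \<longrightarrow> g s \<le> g 0"
  proof (intro allI impI)
    fix s :: real assume "\<bar>0 - s\<bar> < e"
    hence s: "\<bar>s\<bar> < e" by simp
    have "0 \<le> r s D" if "D \<in> ?\<Omega>" for D
      using rpos[OF s, of D] that by (cases "D \<in> P") (auto simp: r_def p0 q0 less_imp_le)
    hence "feasible n m \<alpha> X (r s)" unfolding r_def by (intro feasible_affine[OF fp fq])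
    hence "entropy n m (r s) \<le> entropy n m p" using maxp by blast
    moreover have "r 0 = p" by (simp add: r_def fun_eq_iff)
    ultimately show "g s \<le> g 0" using Hg[of s] Hg[of 0] by simp
  qed
  have der: "(g has_real_derivative - (\<Sum>D\<in>P. (q D - p D) * ln (p D) + (q D - p D))) (at 0)"
    unfolding g_def
  proof (intro DERIV_minus DERIV_sum)
    fix D assume D: "D \<in> P"
    hence pD: "p D > 0" by (auto simp: P_def)
    have "((\<lambda>s. r s D * ln (r s D)) has_real_derivative
       ((q D - p D) * ln (r 0 D) + r 0 D * ((q D - p D) / r 0 D))) (at 0)"
      unfolding r_def using pD
      by (auto intro!: derivative_eq_intros)
    thus "((\<lambda>s. r s D * ln (r s D)) has_real_derivative (q D - p D) * ln (p D) + (q D - p D)) (at 0)"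
      using pD by (simp add: r_def)
  qed
  have "- (\<Sum>D\<in>P. (q D - p D) * ln (p D) + (q D - p D)) = 0"
    by (rule DERIV_local_max[OF der e0 loc])
  moreover have "(\<Sum>D\<in>P. q D - p D) = 0"
  proof -
    have "(\<Sum>D\<in>P. q D) = 1" using sumP[of q] q0 feas_sum[OF fq] by simp
    moreover have "(\<Sum>D\<in>P. p D) = 1" using sumP[of p] p0 feas_sum[OF fp] by simp
    ultimately show ?thesis by (simp add: sum_subtractf)
  qed
  ultimately have "(\<Sum>D\<in>P. (q D - p D) * ln (p D)) = 0" by (simp add: sum.distrib)
  hence "(\<Sum>D\<in>P. q D * ln (p D)) = (\<Sum>D\<in>P. p D * ln (p D))"
    by (simp add: algebra_simps sum_subtractf)
  moreover have "(\<Sum>D\<in>?\<Omega>. q D * ln (p D)) = (\<Sum>D\<in>P. q D * ln (p D))" by (rule sumP) (simp add: q0)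
  moreover have "(\<Sum>D\<in>?\<Omega>. p D * ln (p D)) = (\<Sum>D\<in>P. p D * ln (p D))" by (rule sumP) (simp add: p0)
  ultimately show ?thesis by simp
qed

lemma maxent_unique:
  assumes fp: "feasible n m \<alpha> X p" and maxp: "\<forall>q. feasible n m \<alpha> X q \<longrightarrow> entropy n m q \<le> entropy n m p"
    and fq: "feasible n m \<alpha> X q" and maxq: "\<forall>p. feasible n m \<alpha> X p \<longrightarrow> entropy n m p \<le> entropy n m q"
  shows "p = q"
proof -
  let ?\<Omega> = "datasets n m"
  have o1: "(\<Sum>D\<in>?\<Omega>. q D * ln (p D)) = (\<Sum>D\<in>?\<Omega>. p D * ln (p D))" by (rule maxent_orth[OF fp maxp fq])
  have o2: "(\<Sum>D\<in>?\<Omega>. p D * ln (q D)) = (\<Sum>D\<in>?\<Omega>. q D * ln (q D))" by (rule maxent_orth[OF fq maxq fp])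
  have sp1: "p D > 0 \<Longrightarrow> q D > 0" for D by (rule maxent_support[OF fq maxq fp])
  have sp2: "q D > 0 \<Longrightarrow> p D > 0" for D by (rule maxent_support[OF fp maxp fq])
  have nn: "(p D - q D) * (ln (p D) - ln (q D)) \<ge> 0" for D
  proof (cases "p D > 0")
    case True
    hence q: "q D > 0" by (rule sp1)
    show ?thesis
    proof (cases "p D \<le> q D")
      case True
      hence "ln (p D) \<le> ln (q D)" using \<open>p D > 0\<close> q by simp
      thus ?thesis using True by (intro mult_nonpos_nonpos) auto
    next
      case False
      hence "ln (p D) \<ge> ln (q D)" using \<open>p D > 0\<close> q by simp
      thus ?thesis using False by (intro mult_nonneg_nonneg) auto
    qed
  next
    case False
    hence "p D = 0" using feas_nonneg[OF fp, of D] by simp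
    moreover hence "q D = 0" using sp2[of D] feas_nonneg[OF fq, of D] by linarith
    ultimately show ?thesis by simp
  qed
  have "(\<Sum>D\<in>?\<Omega>. (p D - q D) * (ln (p D) - ln (q D))) = 
     (\<Sum>D\<in>?\<Omega>. p D * ln (p D)) - (\<Sum>D\<in>?\<Omega>. p D * ln (q D)) - (\<Sum>D\<in>?\<Omega>. q D * ln (p D)) + (\<Sum>D\<in>?\<Omega>. q D * ln (q D))"
    by (simp add: algebra_simps sum.distrib sum_subtractf)
  also have "\<dots> = 0" using o1 o2 by simp
  finally have z: "\<forall>D\<in>?\<Omega>. (p D - q D) * (ln (p D) - ln (q D)) = 0"
    by (subst (asm) sum_nonneg_eq_0_iff) (use nn in auto)
  show ?thesis
  proof
    fix D
    show "p D = q D"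
    proof (cases "D \<in> ?\<Omega>")
      case False thus ?thesis using feas_out[OF fp, of D] feas_out[OF fq, of D] by (metis)
    next
      case True
      show ?thesis
      proof (rule ccontr)
        assume ne: "p D \<noteq> q D"
        have "p D > 0 \<or> q D > 0" using ne feas_nonneg[OF fp, of D] feas_nonneg[OF fq, of D] by linarith
        hence "p D > 0" "q D > 0" using sp1 sp2 by auto
        hence "ln (p D) \<noteq> ln (q D)" using ne by simp
        thus False using z True ne by auto
      qed
    qed
  qed
qed

lemma maxent_char:
  assumes "consistent n m \<alpha> X"
  shows "feasible n m \<alpha> X (maxent n m \<alpha> X) \<and>
     (\<forall>q. feasible n m \<alpha> X q \<longrightarrow> entropy n m q \<le> entropy n m (maxent n m \<alpha> X))"
proof -
  have "\<exists>!p. feasible n m \<alpha> X p \<and> (\<forall>q. feasible n m \<alpha> X q \<longrightarrow> entropy n m q \<le> entropy n m p)"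
    using maxent_exists[OF assms] maxent_unique by blast
  from theI'[OF this] show ?thesis unfolding maxent_def .
qed

lemma pyth:
  assumes cM: "consistent n m \<alpha> M" and YM: "Y \<subseteq> M"
  shows "KL n m (maxent n m \<alpha> M) (maxent n m \<alpha> Y) = entropy n m (maxent n m \<alpha> Y) - entropy n m (maxent n m \<alpha> M)"
    and "entropy n m (maxent n m \<alpha> M) \<le> entropy n m (maxent n m \<alpha> Y)"
proof -
  let ?\<Omega> = "datasets n m"
  define pM where "pM = maxent n m \<alpha> M"
  define pY where "pY = maxent n m \<alpha> Y"
  have cY: "consistent n m \<alpha> Y" using cM YM feasible_mono unfolding consistent_def by blast
  have fM: "feasible n m \<alpha> M pM" using maxent_char[OF cM] pM_def by simp
  have fMY: "feasible n m \<alpha> Y pM" using feasible_mono[OF YM fM] .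
  have fY: "feasible n m \<alpha> Y pY" and mY: "\<forall>q. feasible n m \<alpha> Y q \<longrightarrow> entropy n m q \<le> entropy n m pY"
    using maxent_char[OF cY] pY_def by auto
  show "entropy n m (maxent n m \<alpha> M) \<le> entropy n m (maxent n m \<alpha> Y)"
    using mY fMY pM_def pY_def by simp
  have o: "(\<Sum>D\<in>?\<Omega>. pM D * ln (pY D)) = (\<Sum>D\<in>?\<Omega>. pY D * ln (pY D))" by (rule maxent_orth[OF fY mY fMY])
  have "KL n m pM pY = (\<Sum>D\<in>?\<Omega>. pM D * ln (pM D) - pM D * ln (pY D))"
    unfolding KL_def
  proof (rule sum.cong)
    fix D assume "D \<in> ?\<Omega>"
    show "pM D * ln (pM D / pY D) = pM D * ln (pM D) - pM D * ln (pY D)"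
    proof (cases "pM D > 0")
      case True
      hence "pY D > 0" by (rule maxent_support[OF fY mY fMY])
      thus ?thesis using True by (simp add: ln_div algebra_simps)
    next
      case False
      hence "pM D = 0" using feas_nonneg[OF fM, of D] by simp
      thus ?thesis by simp
    qed
  qed simp
  also have "\<dots> = entropy n m pY - entropy n m pM"
    unfolding entropy_def using o by (simp add: sum_subtractf)
  finally show "KL n m (maxent n m \<alpha> M) (maxent n m \<alpha> Y) = entropy n m (maxent n m \<alpha> Y) - entropy n m (maxent n m \<alpha> M)"
    using pM_def pY_def by simp
qed



definition Zs :: "(tile \<Rightarrow> real) \<Rightarrow> tile set \<Rightarrow> (nat \<times> nat) set" where
  "Zs \<alpha> X = (\<Union>T\<in>{T\<in>X. \<alpha> T = 0}. area T)"
definition Os :: "(tile \<Rightarrow> real) \<Rightarrow> tile set \<Rightarrow> (nat \<times> nat) set" where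
  "Os \<alpha> X = (\<Union>T\<in>{T\<in>X. \<alpha> T = 1}. area T)"
definition Om :: "nat \<Rightarrow> nat \<Rightarrow> (tile \<Rightarrow> real) \<Rightarrow> tile set \<Rightarrow> matrix set" where
  "Om n m \<alpha> X = {D \<in> datasets n m. D \<inter> Zs \<alpha> X = {} \<and> Os \<alpha> X \<subseteq> D}"

lemma area_props:
  assumes "tile_ok n m T"
  shows "finite (area T)" "area T \<noteq> {}" "area T \<subseteq> {1..n} \<times> {1..m}"
proof -
  have "fst T \<subseteq> {1..n}" "snd T \<subseteq> {1..m}" "fst T \<noteq> {}" "snd T \<noteq> {}"
    using assms by (auto simp: tile_ok_def)
  moreover hence "finite (fst T)" "finite (snd T)" using finite_subset by auto
  ultimately show "finite (area T)" "area T \<noteq> {}" "area T \<subseteq> {1..n} \<times> {1..m}"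
    by (auto simp: area_def)
qed

lemma fr_data_card:
  assumes "tile_ok n m T"
  shows "fr_data T D = real (card (area T \<inter> D)) / real (card (area T))"
  unfolding fr_data_def using area_props[OF assms] by (simp add: indicator_def sum.If_cases Int_def)

lemma fr_data_bounds:
  assumes "tile_ok n m T"
  shows "0 \<le> fr_data T D" "fr_data T D \<le> 1"
proof -
  have "card (area T \<inter> D) \<le> card (area T)" using area_props[OF assms] by (intro card_mono) auto
  moreover have "card (area T) > 0" using area_props[OF assms] by (simp add: card_gt_0_iff)
  ultimately show "0 \<le> fr_data T D" "fr_data T D \<le> 1" unfolding fr_data_card[OF assms] by auto
qed

lemma fr_data_0:
  assumes "tile_ok n m T"
  shows "fr_data T D = 0 \<longleftrightarrow> area T \<inter> D = {}"
proof -
  have "card (area T) > 0" using area_props[OF assms] by (simp add: card_gt_0_iff)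
  thus ?thesis unfolding fr_data_card[OF assms] using area_props[OF assms] by auto
qed

lemma fr_data_1:
  assumes "tile_ok n m T"
  shows "fr_data T D = 1 \<longleftrightarrow> area T \<subseteq> D"
proof -
  have c: "card (area T) > 0" and f: "finite (area T)" using area_props[OF assms] by (auto simp: card_gt_0_iff)
  have "fr_data T D = 1 \<longleftrightarrow> card (area T \<inter> D) = card (area T)"
    unfolding fr_data_card[OF assms] using c by (auto simp: field_simps)
  also have "\<dots> \<longleftrightarrow> area T \<inter> D = area T" using f
    by (metis card_subset_eq inf_le1)
  finally show ?thesis by auto
qed

lemma supp_exact:
  assumes ok: "\<forall>T\<in>X. tile_ok n m T" and ex: "\<forall>T\<in>X. exact_tile \<alpha> T"
    and fq: "feasible n m \<alpha> X q" and qD: "q D > 0"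
  shows "D \<in> Om n m \<alpha> X"
proof -
  let ?\<Omega> = "datasets n m"
  have DO: "D \<in> ?\<Omega>" using feas_out[OF fq] qD by auto
  have z: "area T \<inter> D = {}" if "T \<in> X" "\<alpha> T = 0" for T
  proof -
    have "(\<Sum>D'\<in>?\<Omega>. q D' * fr_data T D') = 0" using fq that by (auto simp: feasible_def fr_dist_def)
    hence "\<forall>D'\<in>?\<Omega>. q D' * fr_data T D' = 0"
      by (subst (asm) sum_nonneg_eq_0_iff)
         (use ok that in \<open>auto intro!: mult_nonneg_nonneg feas_nonneg[OF fq] fr_data_bounds(1)\<close>)
    hence "fr_data T D = 0" using DO qD by auto
    thus ?thesis using fr_data_0 ok that by blast
  qed
  have o: "area T \<subseteq> D" if "T \<in> X" "\<alpha> T = 1" for T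
  proof -
    have "(\<Sum>D'\<in>?\<Omega>. q D' * fr_data T D') = 1" using fq that by (auto simp: feasible_def fr_dist_def)
    hence "(\<Sum>D'\<in>?\<Omega>. q D' * (1 - fr_data T D')) = 0" using feas_sum[OF fq]
      by (simp add: algebra_simps sum_subtractf)
    hence "\<forall>D'\<in>?\<Omega>. q D' * (1 - fr_data T D') = 0"
      by (subst (asm) sum_nonneg_eq_0_iff)
         (use ok that fr_data_bounds(2)[of n m T] in \<open>auto intro!: mult_nonneg_nonneg feas_nonneg[OF fq]\<close>)
    hence "fr_data T D = 1" using DO qD by auto
    thus ?thesis using fr_data_1 ok that by blast
  qed
  show ?thesis unfolding Om_def Zs_def Os_def using DO z o by blast
qed

lemma card_Om:
  assumes ok: "\<forall>T\<in>X. tile_ok n m T" and ne: "Om n m \<alpha> X \<noteq> {}"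
  shows "card (Om n m \<alpha> X) = 2 ^ card ({1..n} \<times> {1..m} - (Zs \<alpha> X \<union> Os \<alpha> X))"
proof -
  let ?G = "{1..n} \<times> {1..m}"
  have OG: "Os \<alpha> X \<subseteq> ?G" using ok area_props(3) unfolding Os_def by blast
  have ZO: "Zs \<alpha> X \<inter> Os \<alpha> X = {}" using ne unfolding Om_def by blast
  have "bij_betw (\<lambda>D. D - Os \<alpha> X) (Om n m \<alpha> X) (Pow (?G - (Zs \<alpha> X \<union> Os \<alpha> X)))"
    by (rule bij_betw_byWitness[where f' = "\<lambda>E. E \<union> Os \<alpha> X"])
       (use OG ZO in \<open>auto simp: Om_def datasets_def\<close>)
  hence "card (Om n m \<alpha> X) = card (Pow (?G - (Zs \<alpha> X \<union> Os \<alpha> X)))" by (rule bij_betw_same_card)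
  thus ?thesis by (simp add: card_Pow finite_subset)
qed

lemma entropy_exact:
  assumes ok: "\<forall>T\<in>X. tile_ok n m T" and ex: "\<forall>T\<in>X. exact_tile \<alpha> T"
    and cX: "consistent n m \<alpha> X"
  shows "Om n m \<alpha> X \<noteq> {}" "entropy n m (maxent n m \<alpha> X) = ln (real (card (Om n m \<alpha> X)))"
proof -
  let ?\<Omega> = "datasets n m"
  let ?O = "Om n m \<alpha> X"
  have OO: "?O \<subseteq> ?\<Omega>" by (auto simp: Om_def)
  have finO: "finite ?O" using OO finite_subset finite_datasets by blast
  have sumO: "(\<Sum>D\<in>?\<Omega>. f D) = (\<Sum>D\<in>?O. f D)" if "\<And>D. D \<in> ?\<Omega> \<Longrightarrow> D \<notin> ?O \<Longrightarrow> f D = 0" for f :: "matrix \<Rightarrow> real"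
    by (rule sum.mono_neutral_right) (use that OO in auto)
  have qout: "q D = 0" if "feasible n m \<alpha> X q" "D \<notin> ?O" for q D
    using supp_exact[OF ok ex that(1), of D] that feas_nonneg[OF that(1), of D] by force
  obtain q0 where fq0: "feasible n m \<alpha> X q0" using cX by (auto simp: consistent_def)
  show neO: "?O \<noteq> {}"
  proof
    assume "?O = {}"
    hence "(\<Sum>D\<in>?\<Omega>. q0 D) = 0" using sumO[of q0] qout[OF fq0] by simp
    thus False using feas_sum[OF fq0] by simp
  qed
  define N where "N = real (card ?O)"
  have N0: "N > 0" using neO finO by (simp add: N_def card_gt_0_iff)
  define u where "u = (\<lambda>D. if D \<in> ?O then 1 / N else 0)"
  have fu: "feasible n m \<alpha> X u"
    unfolding feasible_def is_dist_def
  proof (intro conjI ballI allI impI)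
    fix D show "0 \<le> u D" if "D \<in> ?\<Omega>" using N0 by (simp add: u_def)
  next
    fix D assume "D \<notin> ?\<Omega>" thus "u D = 0" using OO by (auto simp: u_def)
  next
    show "(\<Sum>D\<in>?\<Omega>. u D) = 1" using N0 by (subst sumO) (auto simp: u_def N_def)
  next
    fix T assume T: "T \<in> X"
    have "fr_dist n m T u = (\<Sum>D\<in>?O. 1 / N * fr_data T D)"
      unfolding fr_dist_def by (subst sumO) (auto simp: u_def)
    also have "\<dots> = \<alpha> T"
    proof (cases "\<alpha> T = 0")
      case True
      have "fr_data T D = 0" if "D \<in> ?O" for D
      proof -
        have "area T \<subseteq> Zs \<alpha> X" using T True unfolding Zs_def by blast
        hence "area T \<inter> D = {}" using that unfolding Om_def by blast
        thus ?thesis using fr_data_0[of n m T D] ok T by simp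
      qed
      thus ?thesis using True by simp
    next
      case False
      hence a1: "\<alpha> T = 1" using ex T by (auto simp: exact_tile_def)
      have "fr_data T D = 1" if "D \<in> ?O" for D
      proof -
        have "area T \<subseteq> Os \<alpha> X" using T a1 unfolding Os_def by blast
        hence "area T \<subseteq> D" using that unfolding Om_def by blast
        thus ?thesis using fr_data_1[of n m T D] ok T by simp
      qed
      hence "(\<Sum>D\<in>?O. 1 / N * fr_data T D) = N * (1 / N)" by (simp add: N_def)
      thus ?thesis using N0 a1 by simp
    qed
    finally show "fr_dist n m T u = \<alpha> T" .
  qed
  have Hu: "entropy n m u = ln N"
  proof -
    have "entropy n m u = - (\<Sum>D\<in>?O. 1 / N * ln (1 / N))"
      unfolding entropy_def by (subst sumO) (auto simp: u_def)
    also have "\<dots> = ln N" using N0 by (simp add: N_def ln_div)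
    finally show ?thesis .
  qed
  have bound: "entropy n m q \<le> ln N" if fq: "feasible n m \<alpha> X q" for q
  proof -
    have "(\<Sum>D\<in>?O. - q D * ln (1/N)) \<ge> (\<Sum>D\<in>?O. - q D * ln (q D) + q D - 1/N)"
      by (rule sum_mono, rule key_ineq) (use feas_nonneg[OF fq] N0 in auto)
    moreover have sq: "(\<Sum>D\<in>?O. q D) = 1" using feas_sum[OF fq] sumO[of q] qout[OF fq] by simp
    moreover have "entropy n m q = (\<Sum>D\<in>?O. - q D * ln (q D))"
    proof -
      have "entropy n m q = (\<Sum>D\<in>?\<Omega>. - q D * ln (q D))" by (simp add: entropy_def sum_negf)
      also have "\<dots> = (\<Sum>D\<in>?O. - q D * ln (q D))" by (rule sumO) (simp add: qout[OF fq])
      finally show ?thesis .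
    qed
    moreover have "(\<Sum>D\<in>?O. - q D * ln (1/N)) = (\<Sum>D\<in>?O. q D) * ln N"
      using N0 by (simp add: ln_div sum_distrib_right)
    moreover have "(\<Sum>D\<in>?O. - q D * ln (q D) + q D - 1/N) = (\<Sum>D\<in>?O. - q D * ln (q D)) + (\<Sum>D\<in>?O. q D) - real (card ?O) * (1/N)"
      by (simp only: sum.distrib sum_subtractf sum_constant)
    moreover have "real (card ?O) * (1/N) = 1" using N0 N_def by simp
    ultimately show ?thesis by simp
  qed
  have mc: "feasible n m \<alpha> X (maxent n m \<alpha> X)" "entropy n m u \<le> entropy n m (maxent n m \<alpha> X)"
    using maxent_char[OF cX] fu by auto
  show "entropy n m (maxent n m \<alpha> X) = ln (real (card ?O))"
    using bound[OF mc(1)] mc(2) Hu N_def by simp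
qed


lemma card_ineq:
  fixes G FT FU FB :: "(nat \<times> nat) set"
  assumes "finite G"
  shows "card (G - (FU \<union> FB)) + card (G - (FT \<union> FB)) \<le> card (G - FB) + card (G - (FT \<union> FU \<union> FB))"
proof -
  let ?A = "G - (FU \<union> FB)" and ?B = "G - (FT \<union> FB)"
  have "card ?A + card ?B = card (?A \<union> ?B) + card (?A \<inter> ?B)"
    by (rule card_Un_Int) (use assms in auto)
  moreover have "card (?A \<union> ?B) \<le> card (G - FB)" by (rule card_mono) (use assms in auto)
  moreover have "?A \<inter> ?B = G - (FT \<union> FU \<union> FB)" by auto
  ultimately show ?thesis by simp
qed

lemma Zs_Un: "Zs \<alpha> (X \<union> Y) = Zs \<alpha> X \<union> Zs \<alpha> Y" unfolding Zs_def by auto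
lemma Os_Un: "Os \<alpha> (X \<union> Y) = Os \<alpha> X \<union> Os \<alpha> Y" unfolding Os_def by auto

lemma entropy_exact2:
  assumes ok: "\<forall>T\<in>X. tile_ok n m T" and ex: "\<forall>T\<in>X. exact_tile \<alpha> T"
    and cX: "consistent n m \<alpha> X"
  shows "entropy n m (maxent n m \<alpha> X) = real (card ({1..n} \<times> {1..m} - (Zs \<alpha> X \<union> Os \<alpha> X))) * ln 2"
  using entropy_exact[OF ok ex cX] card_Om[OF ok] by (simp add: ln_realpow)

theorem theorem6:
  fixes n m :: nat and \<alpha> :: "tile \<Rightarrow> real" and TS US BS :: "tile set"
  assumes "1 \<le> n" and "1 \<le> m"
    and "\<forall>T\<in>TS \<union> US \<union> BS. tile_ok n m T"
    and "consistent n m \<alpha> (TS \<union> US \<union> BS)"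
  shows "dist_d n m \<alpha> TS US BS \<le> 2 \<and>
         ((\<forall>T\<in>TS \<union> US \<union> BS. exact_tile \<alpha> T) \<longrightarrow> dist_d n m \<alpha> TS US BS \<le> 1)"
proof -
  define M where "M = TS \<union> US \<union> BS"
  have cM: "consistent n m \<alpha> M" using assms(4) M_def by simp
  define h where "h = (\<lambda>Y. entropy n m (maxent n m \<alpha> Y))"
  have sub: "BS \<subseteq> M" "US \<union> BS \<subseteq> M" "TS \<union> BS \<subseteq> M" by (auto simp: M_def)
  have cons: "consistent n m \<alpha> Y" if "Y \<subseteq> M" for Y
    using cM that feasible_mono unfolding consistent_def by blast
  have KB: "KL_tiles n m \<alpha> M BS = h BS - h M"
    unfolding KL_tiles_def h_def by (rule pyth(1)[OF cM sub(1)])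
  have KU: "KL_tiles n m \<alpha> M (US \<union> BS) = h (US \<union> BS) - h M"
    unfolding KL_tiles_def h_def by (rule pyth(1)[OF cM sub(2)])
  have KT: "KL_tiles n m \<alpha> M (TS \<union> BS) = h (TS \<union> BS) - h M"
    unfolding KL_tiles_def h_def by (rule pyth(1)[OF cM sub(3)])
  have hMB: "h M \<le> h BS" unfolding h_def by (rule pyth(2)[OF cM sub(1)])
  have hUB: "h (US \<union> BS) \<le> h BS" unfolding h_def
    by (rule pyth(2)[OF cons[OF sub(2)]]) auto
  have hTB: "h (TS \<union> BS) \<le> h BS" unfolding h_def
    by (rule pyth(2)[OF cons[OF sub(3)]]) auto
  have dd: "dist_d n m \<alpha> TS US BS = (if h BS - h M = 0 then 1
      else (h (US \<union> BS) - h M + (h (TS \<union> BS) - h M)) / (h BS - h M))"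
    unfolding dist_d_def Let_def M_def[symmetric] KB KU KT by simp
  have part1: "dist_d n m \<alpha> TS US BS \<le> 2"
  proof (cases "h BS - h M = 0")
    case True thus ?thesis using dd by simp
  next
    case False
    hence pos: "h BS - h M > 0" using hMB by simp
    have "h (US \<union> BS) - h M + (h (TS \<union> BS) - h M) \<le> 2 * (h BS - h M)" using hUB hTB by simp
    thus ?thesis using dd False pos by (simp add: pos_divide_le_eq)
  qed
  have part2: "dist_d n m \<alpha> TS US BS \<le> 1" if ex: "\<forall>T\<in>TS \<union> US \<union> BS. exact_tile \<alpha> T"
  proof (cases "h BS - h M = 0")
    case True thus ?thesis using dd by simp
  next
    case False
    hence pos: "h BS - h M > 0" using hMB by simp
    let ?G = "{1..n} \<times> {1..m}"
    define F where "F = (\<lambda>Y. Zs \<alpha> Y \<union> Os \<alpha> Y)"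
    have hY: "h Y = real (card (?G - F Y)) * ln 2" if "Y \<subseteq> M" for Y
      unfolding h_def F_def
      by (rule entropy_exact2) (use that assms(3) ex cons[OF that] M_def in auto)
    have FU: "F (X \<union> Y) = F X \<union> F Y" for X Y by (auto simp: F_def Zs_Un Os_Un)
    have ci: "card (?G - (F US \<union> F BS)) + card (?G - (F TS \<union> F BS)) \<le> card (?G - F BS) + card (?G - (F TS \<union> F US \<union> F BS))"
      by (rule card_ineq) simp
    hence "real (card (?G - (F US \<union> F BS))) + real (card (?G - (F TS \<union> F BS))) \<le> real (card (?G - F BS)) + real (card (?G - (F TS \<union> F US \<union> F BS)))"
      by linarith
    hence "(real (card (?G - (F US \<union> F BS))) + real (card (?G - (F TS \<union> F BS)))) * ln 2 \<le> (real (card (?G - F BS)) + real (card (?G - (F TS \<union> F US \<union> F BS)))) * ln 2"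
      by (intro mult_right_mono) auto
    moreover have "h (US \<union> BS) = real (card (?G - (F US \<union> F BS))) * ln 2" using hY[OF sub(2)] FU by simp
    moreover have "h (TS \<union> BS) = real (card (?G - (F TS \<union> F BS))) * ln 2" using hY[OF sub(3)] FU by simp
    moreover have "h BS = real (card (?G - F BS)) * ln 2" using hY[OF sub(1)] by simp
    moreover have "h M = real (card (?G - (F TS \<union> F US \<union> F BS))) * ln 2" using hY[of M] FU M_def by simp
    ultimately have "h (US \<union> BS) - h M + (h (TS \<union> BS) - h M) \<le> h BS - h M" by (simp add: algebra_simps)
    thus ?thesis using dd False pos by (simp add: pos_divide_le_eq)
  qed
  show ?thesis using part1 part2 by blast
qed

end
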